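(* Let $k\ge 2$, $\tau=1000k$, $\rho=1-\frac{1}{10\tau}$, let $g:\{0,1\}^n\to\{0,1\}$ be a $k$-term DNF and $y\in\{0,1\}^n$. Then for any set $S\subseteq[n]$ consisting entirely of indices that are morally irrelevant for $g$, \[\left|T_\rho g(y)-T_\rho g(y^{\oplus S})\right|\le\frac{1}{k^{50}},\] where $y^{\oplus S}$ is obtained from $y$ by flipping the bits with indices in $S$.
   Context: A term is short if it has at most $\tau$ literals, medium if it has between $\tau+1$ and $1000\tau\log k$ literals, and long if it has more than $1000\tau\log k$ literals. An index $i\in[n]$ is morally irrelevant for $g$ if no short or medium term of $g$ contains $x_i$ or $\overline{x_i}$. For $x\in\{0,1\}^n$, $\mathbf{y}\sim N_\rho(x)$ means each bit independently has $\mathbf{y}_i=x_i$ with probability $\rho$ and $1-x_i$ with probability $1-\rho$; $T_\rho g(x)=\mathbb{E}_{\mathbf{y}\sim N_\rho(x)}[g(\mathbf{y})]$. *)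

theory Defs
  imports Complex_Main
begin

text \<open>Points of the Boolean cube {0,1}^n are bool lists of length n (True = 1);
  indices are 0..n-1. A literal is a pair (i, b): it is x_i if b = True and
  the negation of x_i if b = False. A term is a finite set of literals
  (their conjunction); a DNF is a list of terms (their disjunction).\<close>

type_synonym literal = "nat \<times> bool"
type_synonym dnf_term = "literal set"
type_synonym dnf = "dnf_term list"

definition cube :: "nat \<Rightarrow> bool list set" where
  "cube n = {x. length x = n}"

definition lit_sat :: "bool list \<Rightarrow> literal \<Rightarrow> bool" where
  "lit_sat x l = (x ! fst l = snd l)"

definition term_sat :: "bool list \<Rightarrow> dnf_term \<Rightarrow> bool" where
  "term_sat x t = (\<forall>l\<in>t. lit_sat x l)"

definition dnf_eval :: "dnf \<Rightarrow> bool list \<Rightarrow> real" where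
  "dnf_eval F x = (if \<exists>t\<in>set F. term_sat x t then 1 else 0)"

definition is_kterm_dnf :: "nat \<Rightarrow> nat \<Rightarrow> dnf \<Rightarrow> bool" where
  "is_kterm_dnf n k F = (length F \<le> k \<and>
     (\<forall>t\<in>set F. finite t \<and> (\<forall>l\<in>t. fst l < n)))"

definition short_or_medium :: "real \<Rightarrow> nat \<Rightarrow> dnf_term \<Rightarrow> bool" where
  "short_or_medium \<tau> k t = (real (card t) \<le> 1000 * \<tau> * log 2 (real k))"

definition morally_irrelevant :: "real \<Rightarrow> nat \<Rightarrow> dnf \<Rightarrow> nat \<Rightarrow> bool" where
  "morally_irrelevant \<tau> k F i =
     (\<forall>t\<in>set F. short_or_medium \<tau> k t \<longrightarrow> (i, True) \<notin> t \<and> (i, False) \<notin> t)"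

definition noise_prob :: "real \<Rightarrow> nat \<Rightarrow> bool list \<Rightarrow> bool list \<Rightarrow> real" where
  "noise_prob \<rho> n x y = (\<Prod>i<n. if y ! i = x ! i then \<rho> else 1 - \<rho>)"

definition T_noise :: "real \<Rightarrow> nat \<Rightarrow> (bool list \<Rightarrow> real) \<Rightarrow> bool list \<Rightarrow> real" where
  "T_noise \<rho> n g x = (\<Sum>y\<in>cube n. noise_prob \<rho> n x y * g y)"

definition flip_set :: "nat set \<Rightarrow> bool list \<Rightarrow> bool list" where
  "flip_set S y = map (\<lambda>j. if j \<in> S then \<not> (y ! j) else y ! j) [0..<length y]"

end

theory Submission imports Defs begin

lemma cube_Suc: "cube (Suc n) = (\<lambda>z. z@[True]) ` cube n \<union> (\<lambda>z. z@[False]) ` cube n"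
proof
  show "cube (Suc n) \<subseteq> (\<lambda>z. z@[True]) ` cube n \<union> (\<lambda>z. z@[False]) ` cube n"
  proof
    fix z assume "z \<in> cube (Suc n)"
    then have "length z = Suc n" by (simp add: cube_def)
    then obtain w b where zw: "z = w @ [b]" and "length w = n"
      by (metis length_Suc_conv_rev)
    then show "z \<in> (\<lambda>z. z@[True]) ` cube n \<union> (\<lambda>z. z@[False]) ` cube n"
      by (cases b) (auto simp: cube_def)
  qed
qed (auto simp: cube_def)

lemma sum_prod_cube:
  "(\<Sum>z\<in>cube n. \<Prod>i<n. f i (z!i)) = (\<Prod>i<n. (f i True + f i False :: real))"
proof (induction n)
  case 0
  have "cube 0 = {[]}" by (auto simp: cube_def)
  then show ?case by simp
next
  case (Suc n)
  have fin: "finite (cube n)"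
  proof -
    have "cube n \<subseteq> {xs. set xs \<subseteq> UNIV \<and> length xs = n}" by (auto simp: cube_def)
    moreover have "finite {xs. set xs \<subseteq> (UNIV::bool set) \<and> length xs = n}"
      by (rule finite_lists_length_eq) simp
    ultimately show ?thesis by (rule finite_subset)
  qed
  have key: "(\<Sum>z\<in>(\<lambda>z. z@[b]) ` cube n. \<Prod>i<Suc n. f i (z!i)) = (\<Prod>i<n. (f i True + f i False)) * f n b" for b
  proof -
    have "(\<Sum>z\<in>(\<lambda>z. z@[b]) ` cube n. \<Prod>i<Suc n. f i (z!i)) = (\<Sum>w\<in>cube n. \<Prod>i<Suc n. f i ((w@[b])!i))"
      by (rule sum.reindex_cong[where l="\<lambda>z. z@[b]"]) (auto simp: inj_on_def)
    also have "\<dots> = (\<Sum>w\<in>cube n. (\<Prod>i<n. f i (w!i)) * f n b)"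
    proof (rule sum.cong[OF refl])
      fix w assume "w \<in> cube n"
      then have lw: "length w = n" by (simp add: cube_def)
      have "(\<Prod>i<Suc n. f i ((w@[b])!i)) = (\<Prod>i<n. f i ((w@[b])!i)) * f n ((w@[b])!n)"
        by simp
      also have "(\<Prod>i<n. f i ((w@[b])!i)) = (\<Prod>i<n. f i (w!i))"
        by (rule prod.cong) (auto simp: lw nth_append)
      also have "(w@[b])!n = b" using lw by (simp add: nth_append)
      finally show "(\<Prod>i<Suc n. f i ((w@[b])!i)) = (\<Prod>i<n. f i (w!i)) * f n b" .
    qed
    also have "\<dots> = (\<Prod>i<n. (f i True + f i False)) * f n b"
      by (simp add: sum_distrib_right[symmetric] Suc.IH)
    finally show ?thesis .
  qed
  have "(\<Sum>z\<in>cube (Suc n). \<Prod>i<Suc n. f i (z!i)) =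
        (\<Sum>z\<in>(\<lambda>z. z@[True]) ` cube n. \<Prod>i<Suc n. f i (z!i)) + (\<Sum>z\<in>(\<lambda>z. z@[False]) ` cube n. \<Prod>i<Suc n. f i (z!i))"
    unfolding cube_Suc by (rule sum.union_disjoint) (use fin in auto)
  also have "\<dots> = (\<Prod>i<n. (f i True + f i False)) * f n True + (\<Prod>i<n. (f i True + f i False)) * f n False"
    by (simp only: key)
  also have "\<dots> = (\<Prod>i<Suc n. (f i True + f i False))"
    by (simp add: distrib_left)
  finally show ?case .
qed

lemma term_prob_le:
  assumes x: "x \<in> cube n" and ft: "finite t" and vt: "\<forall>l\<in>t. fst l < n"
    and r1: "1/2 \<le> \<rho>" and r2: "\<rho> \<le> 1"
  shows "(\<Sum>z\<in>cube n. noise_prob \<rho> n x z * (if term_sat z t then 1 else 0)) \<le> \<rho> ^ card t"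
proof -
  define f where "f i b = (if b = x!i then \<rho> else 1-\<rho>) * (if \<forall>l\<in>t. fst l = i \<longrightarrow> snd l = b then 1 else (0::real))" for i b
  have eq: "noise_prob \<rho> n x z * (if term_sat z t then 1 else 0) = (\<Prod>i<n. f i (z!i))" if "z \<in> cube n" for z
  proof -
    have ts: "term_sat z t \<longleftrightarrow> (\<forall>i<n. \<forall>l\<in>t. fst l = i \<longrightarrow> snd l = z!i)"
      using vt unfolding term_sat_def lit_sat_def by auto
    have ind: "(\<Prod>i<n. (if \<forall>l\<in>t. fst l = i \<longrightarrow> snd l = z!i then 1 else (0::real))) = (if term_sat z t then 1 else 0)"
    proof (cases "term_sat z t")
      case True then show ?thesis using ts by simp
    next
      case False then obtain i where "i<n" "\<not>(\<forall>l\<in>t. fst l = i \<longrightarrow> snd l = z!i)" using ts by blast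
      then have "(\<Prod>i<n. (if \<forall>l\<in>t. fst l = i \<longrightarrow> snd l = z!i then 1 else (0::real))) = 0" by (intro prod_zero) auto
      then show ?thesis using False by simp
    qed
    show ?thesis unfolding noise_prob_def f_def prod.distrib ind[symmetric] by simp
  qed
  have "(\<Sum>z\<in>cube n. noise_prob \<rho> n x z * (if term_sat z t then 1 else 0)) = (\<Sum>z\<in>cube n. \<Prod>i<n. f i (z!i))"
    by (rule sum.cong) (auto simp: eq)
  also have "\<dots> = (\<Prod>i<n. (f i True + f i False))" by (rule sum_prod_cube)
  also have "\<dots> \<le> (\<Prod>i<n. \<rho> ^ card {l\<in>t. fst l = i})"
  proof (rule prod_mono)
    fix i assume "i \<in> {..<n}"
    have A: "{l\<in>t. fst l = i} = (if (i,True)\<in>t then {(i,True)} else {}) \<union> (if (i,False)\<in>t then {(i,False)} else {})"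
    proof (rule set_eqI)
      fix l :: literal
      obtain a b where l: "l = (a,b)" by (cases l)
      show "l \<in> {l\<in>t. fst l = i} \<longleftrightarrow> l \<in> (if (i,True)\<in>t then {(i,True)} else {}) \<union> (if (i,False)\<in>t then {(i,False)} else {})"
        unfolding l by (cases b) auto
    qed
    have cond: "(\<forall>l\<in>t. fst l = i \<longrightarrow> snd l = b) \<longleftrightarrow> (i, \<not>b) \<notin> t" for b
    proof
      assume h: "\<forall>l\<in>t. fst l = i \<longrightarrow> snd l = b"
      show "(i, \<not>b) \<notin> t" using h by auto
    next
      assume h: "(i, \<not>b) \<notin> t"
      show "\<forall>l\<in>t. fst l = i \<longrightarrow> snd l = b"
      proof (intro ballI impI)
        fix l assume l: "l \<in> t" "fst l = i"
        then have "l = (i, snd l)" by (cases l) auto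
        then show "snd l = b" using h l by (cases "snd l"; cases b) auto
      qed
    qed
    have fT: "f i True = (if True = x!i then \<rho> else 1-\<rho>) * (if (i,False)\<in>t then 0 else 1)"
      unfolding f_def using cond[of True] by simp
    have fF: "f i False = (if False = x!i then \<rho> else 1-\<rho>) * (if (i,True)\<in>t then 0 else 1)"
      unfolding f_def using cond[of False] by simp
    show "0 \<le> f i True + f i False \<and> f i True + f i False \<le> \<rho> ^ card {l\<in>t. fst l = i}"
      unfolding A fT fF using r1 r2
      by (cases "(i,True)\<in>t"; cases "(i,False)\<in>t"; cases "x!i") auto
  qed
  also have "\<dots> = \<rho> ^ (\<Sum>i<n. card {l\<in>t. fst l = i})" by (simp add: power_sum)
  also have "(\<Sum>i<n. card {l\<in>t. fst l = i}) = card t"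
  proof -
    have "(\<Sum>i<n. card {l\<in>t. fst l = i}) = (\<Sum>i<n. \<Sum>l\<in>{l\<in>t. fst l = i}. (1::nat))" by simp
    also have "\<dots> = (\<Sum>l\<in>t. 1)" by (rule sum.group) (use ft vt in auto)
    finally show ?thesis by simp
  qed
  finally show ?thesis .
qed

lemma flip_len[simp]: "length (flip_set S w) = length w"
  by (simp add: flip_set_def)

lemma flip_nth: "i < length w \<Longrightarrow> flip_set S w ! i = (if i \<in> S then \<not> w ! i else w ! i)"
  by (simp add: flip_set_def)

lemma flip_flip[simp]: "flip_set S (flip_set S w) = w"
  by (rule nth_equalityI) (auto simp: flip_nth)

lemma flip_cube: "w \<in> cube n \<Longrightarrow> flip_set S w \<in> cube n"
  by (simp add: cube_def)

lemma noise_flip: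
  assumes "y \<in> cube n" "z \<in> cube n"
  shows "noise_prob \<rho> n y (flip_set S z) = noise_prob \<rho> n (flip_set S y) z"
  unfolding noise_prob_def
  by (rule prod.cong) (use assms in \<open>auto simp: cube_def flip_nth\<close>)

lemma reindex_flip:
  assumes "y \<in> cube n"
  shows "(\<Sum>z\<in>cube n. noise_prob \<rho> n (flip_set S y) z * h z) =
         (\<Sum>z\<in>cube n. noise_prob \<rho> n y z * h (flip_set S z))"
  by (rule sum.reindex_bij_witness[of _ "flip_set S" "flip_set S"])
     (auto simp: flip_cube noise_flip[OF assms])

lemma numeric:
  fixes k m :: nat and \<rho> :: real
  assumes k: "k \<ge> 2" and m: "real m > 1000 * (1000 * real k) * log 2 (real k)"
    and r: "\<rho> = 1 - 1 / (10 * (1000 * real k))"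
  shows "\<rho> ^ m \<le> 1 / real k ^ 100"
proof -
  define a where "a = 1 / (10000 * real k)"
  have a0: "a > 0" using k by (simp add: a_def)
  have ra: "\<rho> = 1 - a" using r by (simp add: a_def)
  have r0: "0 \<le> \<rho>" using k by (simp add: ra a_def field_simps)
  have "\<rho> \<le> exp (-a)" using exp_ge_add_one_self[of "-a"] ra by simp
  then have "\<rho> ^ m \<le> exp (-a) ^ m" by (rule power_mono) (rule r0)
  also have "\<dots> = exp (- (a * real m))" by (simp add: exp_of_nat_mult[symmetric] mult.commute)
  also have "\<dots> \<le> exp (- (100 * ln (real k)))"
  proof -
    have lk: "ln (real k) \<ge> 0" using k by simp
    have "log 2 (real k) = ln (real k) / ln 2" by (simp add: log_def)
    also have "\<dots> \<ge> ln (real k)"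
      using lk ln_2_less_1 by (simp add: field_simps mult_left_le)
    finally have l: "log 2 (real k) \<ge> ln (real k)" .
    have "a * real m = real m / (10000 * real k)" by (simp add: a_def)
    also have "\<dots> \<ge> 100 * log 2 (real k)"
      using m k by (simp add: field_simps)
    finally show ?thesis using l by simp
  qed
  also have "\<dots> = 1 / real k ^ 100"
  proof -
    have "exp (100 * ln (real k)) = exp (ln (real k)) ^ 100"
      using exp_of_nat_mult[of 100 "ln (real k)"] by simp
    also have "\<dots> = real k ^ 100" using k by simp
    finally show ?thesis by (simp add: exp_minus field_simps)
  qed
  finally show ?thesis .
qed

theorem claim6p7:
  fixes n k :: nat and \<tau> \<rho> :: real and F :: dnf and y :: "bool list" and S :: "nat set"
  assumes "k \<ge> 2"
    and "\<tau> = 1000 * real k"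
    and "\<rho> = 1 - 1 / (10 * \<tau>)"
    and "is_kterm_dnf n k F"
    and "y \<in> cube n"
    and "S \<subseteq> {0..<n}"
    and "\<forall>i\<in>S. morally_irrelevant \<tau> k F i"
  shows "\<bar>T_noise \<rho> n (dnf_eval F) y - T_noise \<rho> n (dnf_eval F) (flip_set S y)\<bar>
           \<le> 1 / real k ^ 50"
proof -
  note k = assms(1) and tau = assms(2) and rho = assms(3) and F = assms(4) and y = assms(5)
    and mi = assms(7)
  have r: "\<rho> = 1 - 1 / (10 * (1000 * real k))" using rho tau by simp
  have r1: "1/2 \<le> \<rho>" using k by (simp add: r field_simps)
  have r2: "\<rho> \<le> 1" using k by (simp add: r)
  define ys where "ys = flip_set S y"
  have ys: "ys \<in> cube n" using y by (simp add: ys_def flip_cube)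
  define B where "B = {t\<in>set F. \<not> short_or_medium \<tau> k t}"
  define G where "G = {t\<in>set F. short_or_medium \<tau> k t}"
  define g' where "g' z = (if \<exists>t\<in>G. term_sat z t then 1 else (0::real))" for z
  define ind where "ind z t = (if term_sat z t then 1 else (0::real))" for z t
  have finB: "finite B" by (simp add: B_def)
  have fin: "finite (cube n)"
  proof -
    have "cube n \<subseteq> {xs. set xs \<subseteq> UNIV \<and> length xs = n}" by (auto simp: cube_def)
    moreover have "finite {xs. set xs \<subseteq> (UNIV::bool set) \<and> length xs = n}"
      by (rule finite_lists_length_eq) simp
    ultimately show ?thesis by (rule finite_subset)
  qed
  have pnn: "noise_prob \<rho> n x z \<ge> 0" for x z
    unfolding noise_prob_def using r1 r2 by (intro prod_nonneg) auto
  have g'flip: "g' (flip_set S z) = g' z" if z: "z \<in> cube n" for z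
  proof -
    have "term_sat (flip_set S z) t = term_sat z t" if t: "t \<in> G" for t
    proof -
      have "fst l \<notin> S" if l: "l \<in> t" for l
      proof
        assume "fst l \<in> S"
        then have "(fst l, True) \<notin> t \<and> (fst l, False) \<notin> t"
          using mi t unfolding morally_irrelevant_def G_def by auto
        then show False using l by (cases l; cases "snd l") auto
      qed
      moreover have "fst l < length z" if "l \<in> t" for l
        using F t that z unfolding is_kterm_dnf_def G_def cube_def by auto
      ultimately show ?thesis unfolding term_sat_def lit_sat_def by (auto simp: flip_nth)
    qed
    then show ?thesis unfolding g'_def by simp
  qed
  have pw1: "g' z \<le> dnf_eval F z" for z
    unfolding g'_def dnf_eval_def G_def by auto
  have pw2: "dnf_eval F z \<le> g' z + (\<Sum>t\<in>B. ind z t)" for z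
  proof (cases "\<exists>t\<in>set F. term_sat z t")
    case True
    then obtain t where t: "t \<in> set F" "term_sat z t" by blast
    have s0: "(\<Sum>t\<in>B. ind z t) \<ge> 0" by (intro sum_nonneg) (simp add: ind_def)
    show ?thesis
    proof (cases "short_or_medium \<tau> k t")
      case True
      then have "g' z = 1" using t unfolding g'_def G_def by auto
      then show ?thesis using s0 by (simp add: dnf_eval_def)
    next
      case False
      then have "t \<in> B" using t by (simp add: B_def)
      then have "ind z t \<le> (\<Sum>t\<in>B. ind z t)"
        by (intro member_le_sum finB) (simp_all add: ind_def)
      moreover have "g' z \<ge> 0" by (simp add: g'_def)
      ultimately show ?thesis using t by (simp add: dnf_eval_def ind_def)
    qed
  next
    case False
    have "(\<Sum>t\<in>B. ind z t) \<ge> 0" by (intro sum_nonneg) (simp add: ind_def)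
    moreover have "g' z \<ge> 0" by (simp add: g'_def)
    ultimately show ?thesis using False by (simp add: dnf_eval_def)
  qed
  define E where "E x = (\<Sum>z\<in>cube n. noise_prob \<rho> n x z * g' z)" for x
  define H where "H x = (\<Sum>t\<in>B. \<Sum>z\<in>cube n. noise_prob \<rho> n x z * ind z t)" for x
  have lo: "E x \<le> T_noise \<rho> n (dnf_eval F) x" for x
    unfolding E_def T_noise_def by (intro sum_mono mult_left_mono pw1 pnn)
  have hi: "T_noise \<rho> n (dnf_eval F) x \<le> E x + H x" for x
  proof -
    have "T_noise \<rho> n (dnf_eval F) x \<le> (\<Sum>z\<in>cube n. noise_prob \<rho> n x z * (g' z + (\<Sum>t\<in>B. ind z t)))"
      unfolding T_noise_def by (intro sum_mono mult_left_mono pw2 pnn)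
    also have "\<dots> = E x + (\<Sum>z\<in>cube n. \<Sum>t\<in>B. noise_prob \<rho> n x z * ind z t)"
      by (simp add: E_def distrib_left sum.distrib sum_distrib_left)
    also have "(\<Sum>z\<in>cube n. \<Sum>t\<in>B. noise_prob \<rho> n x z * ind z t) = H x"
      unfolding H_def by (rule sum.swap)
    finally show ?thesis .
  qed
  have Eeq: "E ys = E y"
    unfolding E_def ys_def using reindex_flip[OF y, of \<rho> S g'] g'flip
    by (simp add: flip_cube)
  have Hb: "H x \<le> real k * (1 / real k ^ 100)" if x: "x \<in> cube n" for x
  proof -
    have "H x \<le> real (card B) * (1 / real k ^ 100)"
      unfolding H_def
    proof (rule sum_bounded_above)
      fix t assume t: "t \<in> B"
      then have tF: "t \<in> set F" and tl: "\<not> short_or_medium \<tau> k t" by (auto simp: B_def)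
      have ft: "finite t" and vt: "\<forall>l\<in>t. fst l < n" using F tF by (auto simp: is_kterm_dnf_def)
      have "(\<Sum>z\<in>cube n. noise_prob \<rho> n x z * ind z t) \<le> \<rho> ^ card t"
        unfolding ind_def by (rule term_prob_le[OF x ft vt r1 r2])
      also have "\<dots> \<le> 1 / real k ^ 100"
        by (rule numeric[OF k _ r]) (use tl tau in \<open>simp add: short_or_medium_def\<close>)
      finally show "(\<Sum>z\<in>cube n. noise_prob \<rho> n x z * ind z t) \<le> 1 / real k ^ 100" .
    qed
    also have "\<dots> \<le> real k * (1 / real k ^ 100)"
    proof -
      have "card B \<le> card (set F)" by (rule card_mono) (auto simp: B_def)
      also have "\<dots> \<le> length F" by (rule card_length)
      also have "\<dots> \<le> k" using F by (simp add: is_kterm_dnf_def)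
      finally show ?thesis by (intro mult_right_mono) simp_all
    qed
    finally show ?thesis .
  qed
  have fin_bound: "real k * (1 / real k ^ 100) \<le> 1 / real k ^ 50"
  proof -
    have kp: "real k \<ge> 1" using k by simp
    have "real k ^ 51 \<le> real k ^ 100" by (rule power_increasing) (use kp in auto)
    moreover have "real k ^ 51 = real k * real k ^ 50" by (simp add: power_Suc[symmetric] del: power_Suc)
    ultimately have "real k * real k ^ 50 \<le> real k ^ 100" by simp
    then show ?thesis using kp by (simp add: field_simps)
  qed
  have H0: "H x \<ge> 0" for x
    unfolding H_def by (intro sum_nonneg mult_nonneg_nonneg pnn) (simp add: ind_def)
  show ?thesis
    using lo[of y] hi[of y] lo[of ys] hi[of ys] Eeq Hb[OF y] Hb[OF ys] fin_bound
    unfolding ys_def[symmetric] by (simp add: abs_le_iff)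
qed

end
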